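(* Let $d\ge2$, $\omega:=\frac1{\sqrt d}\sum_{i=1}^de_i\otimes e_i\in\mathbb C^d\otimes\mathbb C^d$, $P_\omega:=\omega\omega^\ast$. Fix $\alpha\in[1,d]$, $k:=\lfloor\alpha\rfloor$, $\theta:=\alpha-k\in[0,1)$. Then $$\mu_\alpha(P_\omega)=\max_{\psi\in\mathcal V_\alpha}\langle\psi,P_\omega\psi\rangle=\frac{(k+\theta)^2}{d(k+\theta^2)}.$$ Moreover the maximum is attained by some $\psi\in\mathcal V_\alpha$ with Schmidt coefficients $s_1=\dots=s_k=\frac1{\sqrt{k+\theta^2}}$, $s_{k+1}=\frac\theta{\sqrt{k+\theta^2}}$ (which is $0$ when $\theta=0$), $s_j=0$ for $j\ge k+2$; when $\alpha=d$ one may take $\psi=\omega$.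
   Context: Schmidt coefficients $s_1(\psi)\ge\dots\ge s_d(\psi)\ge0$ of $\psi=\sum a_{ij}e_i\otimes e_j$ are the singular values of $[a_{ij}]$. For $\alpha\in[1,d]$ with $k=\lfloor\alpha\rfloor$, $\theta=\alpha-k$, $r=\lceil\alpha\rceil$, a unit vector $\psi$ is $\alpha$-admissible if $s_j(\psi)=0$ for $j\ge r+1$ and, when $\theta>0$, $s_{k+1}(\psi)\le\frac\theta k\sum_{j=1}^ks_j(\psi)$; $\mathcal V_\alpha$ is the set of these. For Hermitian $W$, $\mu_\alpha(W):=\max\{\langle\psi,W\psi\rangle:\psi\in\mathcal V_\alpha\}$. *)

theory Defs
  imports "Jordan_Normal_Form.Schur_Decomposition" "HOL-Computational_Algebra.Polynomial"
begin

text \<open>A vector psi = sum a_ij e_i (x) e_j in C^d (x) C^d is represented by its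
  coefficient matrix [a_ij], a complex d x d matrix (indices 0..d-1).
  Operators W on C^d (x) C^d are given by their matrix entries W (i,j) (i',j').\<close>

definition sing_vals :: "complex mat \<Rightarrow> real list" where
  "sing_vals A = rev (sorted_list_of_multiset
      (image_mset (\<lambda>z. sqrt (Re z)) (proots (char_poly (mat_adjoint A * A)))))"

text \<open>Schmidt coefficient s_j(psi), 1-based index j (value 0 outside 1..length).\<close>
definition schmidt :: "complex mat \<Rightarrow> nat \<Rightarrow> real" where
  "schmidt psi j = (if 1 \<le> j \<and> j \<le> length (sing_vals psi) then sing_vals psi ! (j - 1) else 0)"

definition tensor_idx :: "nat \<Rightarrow> (nat \<times> nat) set" where
  "tensor_idx d = {..<d} \<times> {..<d}"

definition unit_vec :: "nat \<Rightarrow> complex mat \<Rightarrow> bool" where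
  "unit_vec d psi \<longleftrightarrow> psi \<in> carrier_mat d d \<and> (\<Sum>p\<in>tensor_idx d. (cmod (psi $$ p))\<^sup>2) = 1"

definition qform :: "nat \<Rightarrow> (nat \<times> nat \<Rightarrow> nat \<times> nat \<Rightarrow> complex) \<Rightarrow> complex mat \<Rightarrow> complex" where
  "qform d W psi = (\<Sum>p\<in>tensor_idx d. \<Sum>q\<in>tensor_idx d. cnj (psi $$ p) * W p q * psi $$ q)"

definition admissible :: "nat \<Rightarrow> real \<Rightarrow> complex mat \<Rightarrow> bool" where
  "admissible d \<alpha> psi \<longleftrightarrow>
     (let k = nat \<lfloor>\<alpha>\<rfloor>; \<theta> = \<alpha> - real k; r = nat \<lceil>\<alpha>\<rceil> in
       (\<forall>j. r + 1 \<le> j \<and> j \<le> d \<longrightarrow> schmidt psi j = 0) \<and>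
       (\<theta> > 0 \<longrightarrow> schmidt psi (k + 1) \<le> \<theta> / real k * (\<Sum>j=1..k. schmidt psi j)))"

definition V_alpha :: "nat \<Rightarrow> real \<Rightarrow> complex mat set" where
  "V_alpha d \<alpha> = {psi. unit_vec d psi \<and> admissible d \<alpha> psi}"

definition mu_alpha :: "nat \<Rightarrow> real \<Rightarrow> (nat \<times> nat \<Rightarrow> nat \<times> nat \<Rightarrow> complex) \<Rightarrow> real" where
  "mu_alpha d \<alpha> W = Sup ((\<lambda>psi. Re (qform d W psi)) ` V_alpha d \<alpha>)"

definition omega :: "nat \<Rightarrow> complex mat" where
  "omega d = mat d d (\<lambda>(i, j). if i = j then complex_of_real (1 / sqrt (real d)) else 0)"

definition P_omega :: "nat \<Rightarrow> nat \<times> nat \<Rightarrow> nat \<times> nat \<Rightarrow> complex" where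
  "P_omega d p q = omega d $$ p * cnj (omega d $$ q)"

end

theory Submission
  imports Defs
begin


definition ip :: "nat \<Rightarrow> (nat \<Rightarrow> complex) \<Rightarrow> (nat \<Rightarrow> complex) \<Rightarrow> complex" where
  "ip n u v = (\<Sum>x<n. cnj (u x) * v x)"

definition inspan :: "nat \<Rightarrow> (nat \<Rightarrow> nat \<Rightarrow> complex) \<Rightarrow> nat \<Rightarrow> (nat \<Rightarrow> complex) \<Rightarrow> bool" where
  "inspan n q m v \<longleftrightarrow> (\<exists>c. \<forall>x<n. v x = (\<Sum>i<m. c i * q i x))"

lemma ip_cnj: "ip n v u = cnj (ip n u v)"
  unfolding ip_def by (simp add: mult.commute)

lemma inspan_mono: assumes "inspan n q m v" "m \<le> m'" shows "inspan n q m' v"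
proof -
  from assms obtain c where c: "\<forall>x<n. v x = (\<Sum>i<m. c i * q i x)" unfolding inspan_def by blast
  define c' where "c' i = (if i < m then c i else 0)" for i
  have "(\<Sum>i<m'. c' i * q i x) = (\<Sum>i<m. c i * q i x)" for x
  proof -
    have "(\<Sum>i<m'. c' i * q i x) = (\<Sum>i<m. c' i * q i x)"
      by (rule sum.mono_neutral_right) (use assms(2) c'_def in auto)
    also have "\<dots> = (\<Sum>i<m. c i * q i x)" by (simp add: c'_def)
    finally show ?thesis .
  qed
  note h = this
  show ?thesis unfolding inspan_def by (rule exI[of _ c'], insert h c, simp)
qed

lemma inspan_basis: assumes "i < m" shows "inspan n q m (q i)"
proof -
  have "(\<Sum>l<m. (if l = i then 1 else 0) * q l x) = q i x" for x
  proof -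
    have "(\<Sum>l<m. (if l = i then 1 else 0) * q l x) = (\<Sum>l<m. (if l = i then q l x else 0))"
      by (rule sum.cong) auto
    also have "\<dots> = q i x" using assms by (subst sum.delta) auto
    finally show ?thesis .
  qed
  note h = this
  show ?thesis unfolding inspan_def by (rule exI[of _ "\<lambda>l. if l = i then 1 else 0"], insert h, simp)
qed

lemma inspan_zero: "inspan n q m (\<lambda>x. 0)"
  unfolding inspan_def by (rule exI[of _ "\<lambda>_. 0"]) simp

lemma inspan_add: assumes "inspan n q m u" "inspan n q m v" shows "inspan n q m (\<lambda>x. u x + v x)"
proof -
  from assms obtain c d where c: "\<forall>x<n. u x = (\<Sum>i<m. c i * q i x)"
    and d: "\<forall>x<n. v x = (\<Sum>i<m. d i * q i x)" unfolding inspan_def by blast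
  have "\<forall>x<n. u x + v x = (\<Sum>i<m. (c i + d i) * q i x)"
  proof (intro allI impI)
    fix x assume x: "x < n"
    have "(\<Sum>i<m. (c i + d i) * q i x) = (\<Sum>i<m. c i * q i x) + (\<Sum>i<m. d i * q i x)"
      by (simp add: distrib_right sum.distrib)
    then show "u x + v x = (\<Sum>i<m. (c i + d i) * q i x)" using c d x by simp
  qed
  note h = this
  show ?thesis unfolding inspan_def by (rule exI[of _ "\<lambda>i. c i + d i"], insert h, simp)
qed

lemma inspan_scale: assumes "inspan n q m u" shows "inspan n q m (\<lambda>x. a * u x)"
proof -
  from assms obtain c where c: "\<forall>x<n. u x = (\<Sum>i<m. c i * q i x)" unfolding inspan_def by blast
  have "\<forall>x<n. a * u x = (\<Sum>i<m. (a * c i) * q i x)"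
    using c by (simp add: sum_distrib_left mult.assoc)
  note h = this
  show ?thesis unfolding inspan_def by (rule exI[of _ "\<lambda>i. a * c i"], insert h, simp)
qed

lemma inspan_ext: assumes "inspan n q m u" "\<And>x. x < n \<Longrightarrow> v x = u x" shows "inspan n q m v"
proof -
  from assms obtain c where c: "\<forall>x<n. u x = (\<Sum>i<m. c i * q i x)" unfolding inspan_def by blast
  show ?thesis unfolding inspan_def by (rule exI[of _ c], insert c assms(2), simp)
qed

lemma inspan_sum: assumes "finite I" "\<And>i. i \<in> I \<Longrightarrow> inspan n q m (v i)"
  shows "inspan n q m (\<lambda>x. \<Sum>i\<in>I. v i x)"
  using assms
proof (induction I rule: finite_induct)
  case empty then show ?case by (simp add: inspan_zero)
next
  case (insert a F)
  then have "inspan n q m (\<lambda>x. v a x + (\<Sum>i\<in>F. v i x))" by (intro inspan_add) auto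
  then show ?case using insert by simp
qed

lemma inspan_trans: assumes "\<And>i. i < m \<Longrightarrow> inspan n p m' (q i)" "inspan n q m v"
  shows "inspan n p m' v"
proof -
  from assms obtain c where c: "\<forall>x<n. v x = (\<Sum>i<m. c i * q i x)" unfolding inspan_def by blast
  have "inspan n p m' (\<lambda>x. \<Sum>i<m. c i * q i x)"
    by (rule inspan_sum) (auto intro: inspan_scale assms(1))
  moreover have "\<And>x. x < n \<Longrightarrow> v x = (\<Sum>i<m. c i * q i x)" using c by simp
  ultimately show ?thesis by (rule inspan_ext)
qed

lemma inspan_cong: assumes "\<And>i x. i < m \<Longrightarrow> x < n \<Longrightarrow> q i x = q' i x" "inspan n q m v"
  shows "inspan n q' m v"
proof -
  from assms obtain c where c: "\<forall>x<n. v x = (\<Sum>i<m. c i * q i x)" unfolding inspan_def by blast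
  have "\<forall>x<n. v x = (\<Sum>i<m. c i * q' i x)" using c assms(1) by simp
  note h = this
  show ?thesis unfolding inspan_def by (rule exI[of _ c], insert h, simp)
qed

lemma ip_inspan: assumes "\<And>l. l < m \<Longrightarrow> ip n w (q l) = 0" "inspan n q m v"
  shows "ip n w v = 0"
proof -
  from assms obtain c where c: "\<forall>x<n. v x = (\<Sum>i<m. c i * q i x)" unfolding inspan_def by blast
  have "ip n w v = (\<Sum>x<n. cnj (w x) * (\<Sum>i<m. c i * q i x))"
    unfolding ip_def using c by simp
  also have "\<dots> = (\<Sum>i<m. c i * ip n w (q i))"
  proof -
    have "(\<Sum>x<n. cnj (w x) * (\<Sum>i<m. c i * q i x)) = (\<Sum>x<n. \<Sum>i<m. c i * (cnj (w x) * q i x))"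
      by (simp add: sum_distrib_left mult_ac)
    also have "\<dots> = (\<Sum>i<m. \<Sum>x<n. c i * (cnj (w x) * q i x))" by (rule sum.swap)
    also have "\<dots> = (\<Sum>i<m. c i * ip n w (q i))" unfolding ip_def by (simp add: sum_distrib_left)
    finally show ?thesis .
  qed
  also have "\<dots> = 0" using assms(1) by simp
  finally show ?thesis .
qed




definition orthn :: "nat \<Rightarrow> (nat \<Rightarrow> nat \<Rightarrow> complex) \<Rightarrow> nat \<Rightarrow> bool" where
  "orthn n q m \<longleftrightarrow> (\<forall>i<m. \<forall>l<m. ip n (q l) (q i) = (if l = i then 1 else 0))"

lemma ip_self: "ip n u u = complex_of_real (\<Sum>x<n. (cmod (u x))\<^sup>2)"
  unfolding ip_def of_real_sum by (rule sum.cong) (simp_all add: complex_norm_square mult.commute del: of_real_power)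

lemma gs_step:
  fixes p q :: "nat \<Rightarrow> nat \<Rightarrow> complex" and Qf :: "nat \<Rightarrow> nat \<Rightarrow> complex"
  assumes indep: "\<And>l j. l < n \<Longrightarrow> j < n \<Longrightarrow> (\<Sum>x<n. Qf l x * p j x) = (if l = j then 1 else 0)"
    and m: "m < n" and orth: "orthn n q m"
    and sp1: "\<And>j. j < m \<Longrightarrow> inspan n q (Suc j) (p j)"
    and sp2: "\<And>j. j < m \<Longrightarrow> inspan n p (Suc j) (q j)"
  shows "\<exists>q'. orthn n q' (Suc m) \<and> (\<forall>j<Suc m. inspan n q' (Suc j) (p j) \<and> inspan n p (Suc j) (q' j))"
proof -
  define c where "c i = ip n (q i) (p m)" for i
  define u where "u x = p m x - (\<Sum>i<m. c i * q i x)" for x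
  have ipu: "ip n (q l) u = 0" if l: "l < m" for l
  proof -
    have "ip n (q l) u = ip n (q l) (p m) - (\<Sum>x<n. \<Sum>i<m. c i * (cnj (q l x) * q i x))"
      unfolding ip_def u_def by (simp add: right_diff_distrib sum_subtractf sum_distrib_left mult_ac)
    also have "(\<Sum>x<n. \<Sum>i<m. c i * (cnj (q l x) * q i x)) = (\<Sum>i<m. \<Sum>x<n. c i * (cnj (q l x) * q i x))"
      by (rule sum.swap)
    also have "\<dots> = (\<Sum>i<m. c i * ip n (q l) (q i))" unfolding ip_def by (simp add: sum_distrib_left)
    also have "\<dots> = (\<Sum>i<m. if i = l then c i else 0)"
      by (rule sum.cong) (use orth l in \<open>auto simp: orthn_def\<close>)
    also have "\<dots> = c l" using l by (subst sum.delta) auto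
    finally show ?thesis unfolding c_def by simp
  qed
  have qp: "inspan n p m (q i)" if "i < m" for i
    using sp2[OF that] inspan_mono that by (metis Suc_leI)
  have unz: "\<exists>x<n. u x \<noteq> 0"
  proof (rule ccontr)
    assume "\<not> (\<exists>x<n. u x \<noteq> 0)"
    then have "\<forall>x<n. p m x = (\<Sum>i<m. c i * q i x)" unfolding u_def by auto
    note h = this
    have "inspan n q m (p m)" unfolding inspan_def by (rule exI[of _ c], insert h, simp)
    then have "inspan n p m (p m)" using inspan_trans[of m n p m q "p m"] qp by blast
    then obtain e where e: "\<forall>x<n. p m x = (\<Sum>l<m. e l * p l x)" unfolding inspan_def by blast
    have "1 = (\<Sum>x<n. Qf m x * p m x)" using indep[OF m m] by simp
    also have "\<dots> = (\<Sum>x<n. \<Sum>l<m. e l * (Qf m x * p l x))"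
      using e by (simp add: sum_distrib_left mult_ac)
    also have "\<dots> = (\<Sum>l<m. \<Sum>x<n. e l * (Qf m x * p l x))" by (rule sum.swap)
    also have "\<dots> = (\<Sum>l<m. e l * (\<Sum>x<n. Qf m x * p l x))" by (simp add: sum_distrib_left)
    also have "\<dots> = 0" using indep m by (intro sum.neutral) auto
    finally show False by simp
  qed
  define N where "N = sqrt (\<Sum>x<n. (cmod (u x))\<^sup>2)"
  have "(\<Sum>x<n. (cmod (u x))\<^sup>2) > 0"
  proof -
    from unz obtain x where x: "x < n" "u x \<noteq> 0" by blast
    have "(cmod (u x))\<^sup>2 \<le> (\<Sum>x<n. (cmod (u x))\<^sup>2)"
      by (rule member_le_sum) (use x in auto)
    moreover have "(cmod (u x))\<^sup>2 > 0" using x by simp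
    ultimately show ?thesis by linarith
  qed
  then have Npos: "N > 0" and N2: "N\<^sup>2 = (\<Sum>x<n. (cmod (u x))\<^sup>2)" unfolding N_def by auto
  define q' where "q' = q(m := (\<lambda>x. u x / complex_of_real N))"
  have q'i: "q' i = q i" if "i < m" for i using that unfolding q'_def by auto
  have q'm: "q' m = (\<lambda>x. u x / complex_of_real N)" unfolding q'_def by simp
  have ipmm: "ip n (q' m) (q' m) = 1"
  proof -
    have "ip n (q' m) (q' m) = ip n u u / (complex_of_real N)\<^sup>2"
      unfolding q'm ip_def by (simp add: sum_divide_distrib power2_eq_square)
    also have "\<dots> = complex_of_real (N\<^sup>2) / (complex_of_real N)\<^sup>2" by (simp only: ip_self N2)
    also have "\<dots> = 1" using Npos by simp
    finally show ?thesis .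
  qed
  have iplm: "ip n (q' l) (q' m) = 0" if "l < m" for l
  proof -
    have "ip n (q' l) (q' m) = ip n (q l) u / complex_of_real N"
      unfolding q'm q'i[OF that] ip_def by (simp add: sum_divide_distrib)
    then show ?thesis using ipu[OF that] by simp
  qed
  have orth': "orthn n q' (Suc m)"
    unfolding orthn_def
  proof (intro allI impI)
    fix i l assume i: "i < Suc m" and l: "l < Suc m"
    show "ip n (q' l) (q' i) = (if l = i then 1 else 0)"
    proof (cases "i = m")
      case True
      then show ?thesis using ipmm iplm l by (cases "l = m") auto
    next
      case False
      then have i': "i < m" using i by simp
      show ?thesis
      proof (cases "l = m")
        case True
        then show ?thesis using iplm[OF i'] ip_cnj[of n "q' m" "q' i"] i' by simp
      next
        case False
        then show ?thesis using orth i' l q'i unfolding orthn_def by simp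
      qed
    qed
  qed
  have cong: "\<And>j. j < m \<Longrightarrow> (\<And>i x. i < Suc j \<Longrightarrow> x < n \<Longrightarrow> q i x = q' i x)"
    using q'i by simp
  have new1: "inspan n q' (Suc m) (p m)"
  proof -
    define c' where "c' = c(m := complex_of_real N)"
    have "\<forall>x<n. p m x = (\<Sum>i<Suc m. c' i * q' i x)"
      using Npos by (simp add: c'_def q'm u_def q'i)
    note h = this
    show ?thesis unfolding inspan_def by (rule exI[of _ c'], insert h, simp)
  qed
  have new2: "inspan n p (Suc m) (q' m)"
  proof -
    have "inspan n p (Suc m) (\<lambda>x. (1 / complex_of_real N) * (p m x + (\<Sum>i<m. (- c i) * q i x)))"
    proof (rule inspan_scale, rule inspan_add)
      show "inspan n p (Suc m) (p m)" by (rule inspan_basis) simp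
      show "inspan n p (Suc m) (\<lambda>x. \<Sum>i<m. - c i * q i x)"
      proof (rule inspan_sum)
        fix i assume i: "i \<in> {..<m}"
        have "inspan n p (Suc m) (q i)" using i by (intro inspan_mono[OF qp[of i]]) auto
        then show "inspan n p (Suc m) (\<lambda>x. - c i * q i x)" by (rule inspan_scale)
      qed simp
    qed
    then show ?thesis
    proof (rule inspan_ext)
      fix x
      have "(\<Sum>i<m. - c i * q i x) = - (\<Sum>i<m. c i * q i x)" by (simp add: sum_negf)
      then show "q' m x = 1 / complex_of_real N * (p m x + (\<Sum>i<m. - c i * q i x))"
        by (simp add: q'm u_def)
    qed
  qed
  have "\<forall>j<Suc m. inspan n q' (Suc j) (p j) \<and> inspan n p (Suc j) (q' j)"
  proof (intro allI impI)
    fix j assume j: "j < Suc m"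
    show "inspan n q' (Suc j) (p j) \<and> inspan n p (Suc j) (q' j)"
    proof (cases "j = m")
      case True then show ?thesis using new1 new2 by simp
    next
      case False
      then have j': "j < m" using j by simp
      show ?thesis using inspan_cong[OF cong[OF j'] sp1[OF j']] sp2[OF j'] q'i[OF j'] by simp
    qed
  qed
  with orth' show ?thesis by blast
qed

lemma gs:
  fixes p :: "nat \<Rightarrow> nat \<Rightarrow> complex" and Qf :: "nat \<Rightarrow> nat \<Rightarrow> complex"
  assumes indep: "\<And>l j. l < n \<Longrightarrow> j < n \<Longrightarrow> (\<Sum>x<n. Qf l x * p j x) = (if l = j then 1 else 0)"
  shows "m \<le> n \<Longrightarrow> \<exists>q. orthn n q m \<and> (\<forall>j<m. inspan n q (Suc j) (p j) \<and> inspan n p (Suc j) (q j))"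
proof (induction m)
  case 0 then show ?case by (auto simp: orthn_def)
next
  case (Suc m)
  then obtain q where "orthn n q m" "\<forall>j<m. inspan n q (Suc j) (p j) \<and> inspan n p (Suc j) (q j)" by auto
  then show ?case using gs_step[OF indep, of m q] Suc.prems by auto
qed



lemma adj_dims[simp]: "dim_row (mat_adjoint A) = dim_col A" "dim_col (mat_adjoint A) = dim_row A"
  unfolding mat_adjoint_def by (simp_all add: mat_of_rows_def)

lemma adj_index[simp]: "i < dim_col A \<Longrightarrow> j < dim_row A \<Longrightarrow> mat_adjoint A $$ (i,j) = cnj (A $$ (j,i))"
  unfolding mat_adjoint_def by (simp add: mat_of_rows_def)

lemma adj_carrier[simp]: assumes "A \<in> carrier_mat n m" shows "mat_adjoint A \<in> carrier_mat m n"
proof -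
  have "dim_row A = n" "dim_col A = m" using carrier_matD[OF assms] by auto
  then show ?thesis by (intro carrier_matI) simp_all
qed

lemma mult_entry:
  assumes "A \<in> carrier_mat m n" "B \<in> carrier_mat n l" "i < m" "j < l"
  shows "(A * B) $$ (i,j) = (\<Sum>k<n. A $$ (i,k) * B $$ (k,j))"
  using assms by (auto simp: scalar_prod_def lessThan_atLeast0 intro!: sum.cong)

lemma schur_unitary:
  fixes M :: "complex mat"
  assumes M: "M \<in> carrier_mat n n"
  shows "\<exists>U \<in> carrier_mat n n. mat_adjoint U * U = 1\<^sub>m n \<and> upper_triangular (mat_adjoint U * M * U)"
proof -
  obtain es where es: "char_poly M = (\<Prod>a\<leftarrow>es. [:-a,1:])" using char_poly_factorized[OF M] by auto
  obtain B P Q where sd: "schur_decomposition M es = (B,P,Q)" by (cases "schur_decomposition M es") auto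
  from schur_decomposition[OF M es sd] have wit: "similar_mat_wit M B P Q" and ut: "upper_triangular B" by auto
  from wit M have B: "B \<in> carrier_mat n n" and P: "P \<in> carrier_mat n n" and Q: "Q \<in> carrier_mat n n"
     and PQ: "P * Q = 1\<^sub>m n" and QP: "Q * P = 1\<^sub>m n" and MPBQ: "M = P * B * Q"
     unfolding similar_mat_wit_def Let_def by auto
  have MP: "M * P = P * B"
  proof -
    have "M * P = P * B * Q * P" using MPBQ by simp
    also have "\<dots> = (P * B) * (Q * P)" using P B Q by (simp add: assoc_mult_mat[of _ n n _ n _ n])
    also have "\<dots> = P * B" using QP P B by simp
    finally show ?thesis .
  qed
  define p where "p j x = P $$ (x,j)" for j x
  define Qf where "Qf l x = Q $$ (l,x)" for l x
  have indep: "(\<Sum>x<n. Qf l x * p j x) = (if l = j then 1 else 0)" if "l < n" "j < n" for l j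
  proof -
    have "(\<Sum>x<n. Qf l x * p j x) = (Q * P) $$ (l,j)"
      using mult_entry[OF Q P that] by (simp add: Qf_def p_def)
    also have "\<dots> = (if l = j then 1 else 0)" using QP that by simp
    finally show ?thesis .
  qed
  obtain q where orth: "orthn n q n" and sp: "\<forall>j<n. inspan n q (Suc j) (p j) \<and> inspan n p (Suc j) (q j)"
    using gs[of n Qf p n] indep by auto
  define U where "U = mat n n (\<lambda>(x,j). q j x)"
  have U: "U \<in> carrier_mat n n" unfolding U_def by simp
  have UU: "mat_adjoint U * U = 1\<^sub>m n"
  proof (rule eq_matI)
    fix i j assume i: "i < dim_row (1\<^sub>m n :: complex mat)" and j: "j < dim_col (1\<^sub>m n :: complex mat)"
    then have "(mat_adjoint U * U) $$ (i,j) = (\<Sum>x<n. cnj (q i x) * q j x)"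
      using mult_entry[OF adj_carrier[OF U] U, of i j] U by (simp add: U_def)
    also have "\<dots> = ip n (q i) (q j)" unfolding ip_def ..
    also have "\<dots> = 1\<^sub>m n $$ (i,j)" using orth i j unfolding orthn_def by auto
    finally show "(mat_adjoint U * U) $$ (i,j) = 1\<^sub>m n $$ (i,j)" .
  qed (use U in auto)
  have T: "mat_adjoint U * M * U = mat_adjoint U * (M * U)"
    using U M by (simp add: assoc_mult_mat[of _ n n _ n _ n])
  have ut': "upper_triangular (mat_adjoint U * M * U)"
    unfolding upper_triangular_def
  proof (intro allI impI)
    fix i j assume i: "i < dim_row (mat_adjoint U * M * U)" and ji: "j < i"
    then have i: "i < n" using U by simp
    have j: "j < n" using i ji by simp
    define w where "w y = (\<Sum>x<n. M $$ (y,x) * q j x)" for y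
    have entry: "(mat_adjoint U * M * U) $$ (i,j) = ip n (q i) w"
    proof -
      have "(mat_adjoint U * (M * U)) $$ (i,j) = (\<Sum>y<n. mat_adjoint U $$ (i,y) * (M * U) $$ (y,j))"
        using mult_entry[OF adj_carrier[OF U] mult_carrier_mat[OF M U] i j] .
      also have "\<dots> = (\<Sum>y<n. cnj (q i y) * w y)"
      proof (rule sum.cong)
        fix y assume "y \<in> {..<n}"
        then have y: "y < n" by simp
        have "(M * U) $$ (y,j) = (\<Sum>x<n. M $$ (y,x) * U $$ (x,j))" by (rule mult_entry[OF M U y j])
        also have "\<dots> = w y" unfolding w_def by (rule sum.cong) (auto simp: U_def j)
        finally show "mat_adjoint U $$ (i,y) * (M * U) $$ (y,j) = cnj (q i y) * w y"
          using U i y by (simp add: U_def)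
      qed simp
      finally show ?thesis unfolding T ip_def .
    qed
    obtain s where s: "\<forall>x<n. q j x = (\<Sum>l<Suc j. s l * p l x)"
      using sp j unfolding inspan_def by blast
    have wexp: "w y = (\<Sum>l<Suc j. s l * (\<Sum>t<n. B $$ (t,l) * p t y))" if y: "y < n" for y
    proof -
      have "w y = (\<Sum>x<n. M $$ (y,x) * (\<Sum>l<Suc j. s l * p l x))"
        unfolding w_def using s by simp
      also have "\<dots> = (\<Sum>x<n. \<Sum>l<Suc j. s l * (M $$ (y,x) * p l x))"
        by (rule sum.cong[OF refl], subst sum_distrib_left, rule sum.cong[OF refl], rule mult.left_commute)
      also have "\<dots> = (\<Sum>l<Suc j. \<Sum>x<n. s l * (M $$ (y,x) * p l x))" by (rule sum.swap)
      also have "\<dots> = (\<Sum>l<Suc j. s l * (M * P) $$ (y,l))"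
      proof (rule sum.cong)
        fix l assume "l \<in> {..<Suc j}"
        then have l: "l < n" using j by simp
        show "(\<Sum>x<n. s l * (M $$ (y,x) * p l x)) = s l * (M * P) $$ (y,l)"
          using mult_entry[OF M P y l] by (simp add: p_def sum_distrib_left)
      qed simp
      also have "\<dots> = (\<Sum>l<Suc j. s l * (\<Sum>t<n. B $$ (t,l) * p t y))"
      proof (rule sum.cong)
        fix l assume "l \<in> {..<Suc j}"
        then have l: "l < n" using j by simp
        show "s l * (M * P) $$ (y,l) = s l * (\<Sum>t<n. B $$ (t,l) * p t y)"
          unfolding MP using mult_entry[OF P B y l] by (simp add: p_def mult_ac)
      qed simp
      finally show ?thesis .
    qed
    have "inspan n q (Suc j) (\<lambda>y. \<Sum>l<Suc j. s l * (\<Sum>t<n. B $$ (t,l) * p t y))"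
    proof (rule inspan_sum)
      fix l assume l: "l \<in> {..<Suc j}"
      have "inspan n q (Suc j) (\<lambda>y. \<Sum>t<n. B $$ (t,l) * p t y)"
      proof (rule inspan_sum)
        fix t assume t: "t \<in> {..<n}"
        show "inspan n q (Suc j) (\<lambda>y. B $$ (t,l) * p t y)"
        proof (cases "t \<le> l")
          case True
          then have "inspan n q (Suc j) (p t)"
            using sp t l True j by (intro inspan_mono[of n q "Suc t" "p t" "Suc j"]) auto
          then show ?thesis by (rule inspan_scale)
        next
          case False
          then have "B $$ (t,l) = 0" using ut t B unfolding upper_triangular_def by auto
          then show ?thesis by (intro inspan_ext[OF inspan_zero]) simp
        qed
      qed simp
      then show "inspan n q (Suc j) (\<lambda>y. s l * (\<Sum>t<n. B $$ (t,l) * p t y))" by (rule inspan_scale)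
    qed simp
    then have "inspan n q (Suc j) w" by (rule inspan_ext) (simp add: wexp)
    moreover have "ip n (q i) (q l) = 0" if "l < Suc j" for l
      using orth i j that ji unfolding orthn_def by auto
    ultimately have "ip n (q i) w = 0" by (rule ip_inspan[rotated]) auto
    then show "(mat_adjoint U * M * U) $$ (i,j) = 0" using entry by simp
  qed
  show ?thesis using U UU ut' by blast
qed



lemma adj_mult:
  fixes A B :: "complex mat"
  assumes A: "A \<in> carrier_mat n m" and B: "B \<in> carrier_mat m l"
  shows "mat_adjoint (A * B) = mat_adjoint B * mat_adjoint A"
proof (rule eq_matI)
  fix i j assume i: "i < dim_row (mat_adjoint B * mat_adjoint A)" and j: "j < dim_col (mat_adjoint B * mat_adjoint A)"
  then have i': "i < l" and j': "j < n" using A B by auto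
  have "mat_adjoint (A * B) $$ (i,j) = cnj ((A * B) $$ (j,i))" using A B i' j' by simp
  also have "\<dots> = (\<Sum>k<m. cnj (A $$ (j,k)) * cnj (B $$ (k,i)))" by (simp add: mult_entry[OF A B j' i'])
  also have "\<dots> = (mat_adjoint B * mat_adjoint A) $$ (i,j)"
    using A B i' j' by (simp add: mult_entry[OF adj_carrier[OF B] adj_carrier[OF A] i' j'] mult.commute del: index_mult_mat)
  finally show "mat_adjoint (A * B) $$ (i,j) = (mat_adjoint B * mat_adjoint A) $$ (i,j)" .
qed (use A B in auto)

lemma amgm: fixes a b t :: real assumes "t > 0" shows "a * b \<le> (t * a\<^sup>2 + b\<^sup>2 / t) / 2"
proof -
  have "0 \<le> (t * a - b)\<^sup>2 / t" using assms by simp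
  also have "(t * a - b)\<^sup>2 / t = t * a\<^sup>2 + b\<^sup>2 / t - 2 * a * b"
    using assms by (simp add: power2_eq_square field_simps)
  finally show ?thesis by simp
qed

lemma cs_complex:
  fixes u w :: "nat \<Rightarrow> complex"
  shows "cmod (\<Sum>x<n. cnj (u x) * w x) \<le> sqrt (\<Sum>x<n. (cmod (u x))\<^sup>2) * sqrt (\<Sum>x<n. (cmod (w x))\<^sup>2)"
proof -
  define a where "a = sqrt (\<Sum>x<n. (cmod (u x))\<^sup>2)"
  define b where "b = sqrt (\<Sum>x<n. (cmod (w x))\<^sup>2)"
  have a2: "a\<^sup>2 = (\<Sum>x<n. (cmod (u x))\<^sup>2)" unfolding a_def by (simp add: sum_nonneg)
  have b2: "b\<^sup>2 = (\<Sum>x<n. (cmod (w x))\<^sup>2)" unfolding b_def by (simp add: sum_nonneg)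
  have le1: "cmod (\<Sum>x<n. cnj (u x) * w x) \<le> (\<Sum>x<n. cmod (u x) * cmod (w x))"
    by (rule order_trans[OF norm_sum]) (simp add: norm_mult)
  show ?thesis
  proof (cases "a = 0 \<or> b = 0")
    case True
    then have "(\<forall>x<n. u x = 0) \<or> (\<forall>x<n. w x = 0)"
      using a2 b2 by (auto simp: sum_nonneg_eq_0_iff)
    then have "(\<Sum>x<n. cmod (u x) * cmod (w x)) = 0" by auto
    then show ?thesis using le1 True unfolding a_def b_def by auto
  next
    case False
    have "a \<ge> 0" "b \<ge> 0" unfolding a_def b_def by (simp_all add: sum_nonneg)
    then have ap: "a > 0" and bp: "b > 0" using False by linarith+
    have "(\<Sum>x<n. cmod (u x) * cmod (w x)) \<le> (\<Sum>x<n. ((b/a) * (cmod (u x))\<^sup>2 + (cmod (w x))\<^sup>2 / (b/a)) / 2)"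
      by (rule sum_mono, rule amgm) (use ap bp in simp)
    also have "\<dots> = (\<Sum>x<n. (b/(2*a)) * (cmod (u x))\<^sup>2 + (a/(2*b)) * (cmod (w x))\<^sup>2)"
      by (rule sum.cong) (use ap bp in \<open>simp_all add: field_simps\<close>)
    also have "\<dots> = (b/(2*a)) * (\<Sum>x<n. (cmod (u x))\<^sup>2) + (a/(2*b)) * (\<Sum>x<n. (cmod (w x))\<^sup>2)"
      by (simp add: sum.distrib sum_distrib_left)
    also have "\<dots> = a * b" unfolding a2[symmetric] b2[symmetric] using ap bp by (simp add: power2_eq_square field_simps)
    finally show ?thesis using le1 unfolding a_def b_def by linarith
  qed
qed

lemma proots_linear_prod: "proots (\<Prod>a\<leftarrow>es. [:- a, 1:]) = mset (es :: complex list)"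
proof (induction es)
  case Nil then show ?case by simp
next
  case (Cons e es)
  have "proots (\<Prod>a\<leftarrow>e # es. [:- a, 1:]) = proots ([:- e, 1:] * (\<Prod>a\<leftarrow>es. [:- a, 1:]))" by simp
  also have "\<dots> = proots [:- e, 1:] + proots (\<Prod>a\<leftarrow>es. [:- a, 1:])"
    by (rule proots_mult) (auto simp: prod_list_zero_iff)
  finally show ?case using Cons by simp
qed

lemma sv_main:
  fixes A U :: "complex mat"
  assumes A: "A \<in> carrier_mat n n" and U: "U \<in> carrier_mat n n" and UU: "mat_adjoint U * U = 1\<^sub>m n"
    and ut: "upper_triangular (mat_adjoint U * (mat_adjoint A * A) * U)"
  defines "\<sigma> \<equiv> (\<lambda>i. sqrt (\<Sum>x<n. (cmod ((A * U) $$ (x,i)))\<^sup>2))"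
  shows "sing_vals A = rev (sorted_list_of_multiset (mset (map \<sigma> [0..<n])))"
    and "(\<Sum>i<n. (\<sigma> i)\<^sup>2) = (\<Sum>x<n. \<Sum>y<n. (cmod (A $$ (x,y)))\<^sup>2)"
    and "cmod (\<Sum>x<n. A $$ (x,x)) \<le> (\<Sum>i<n. \<sigma> i)"
proof -
  define W where "W = A * U"
  define H where "H = mat_adjoint A * A"
  define T where "T = mat_adjoint U * H * U"
  have W: "W \<in> carrier_mat n n" unfolding W_def using A U by simp
  have H: "H \<in> carrier_mat n n" unfolding H_def by (rule mult_carrier_mat[OF adj_carrier[OF A] A])
  have T: "T \<in> carrier_mat n n" unfolding T_def
    by (rule mult_carrier_mat[OF mult_carrier_mat[OF adj_carrier[OF U] H] U])
  have Ua: "mat_adjoint U \<in> carrier_mat n n" using U by simp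
  have Aa: "mat_adjoint A \<in> carrier_mat n n" using A by simp
  have UU': "U * mat_adjoint U = 1\<^sub>m n" by (rule mat_mult_left_right_inverse[OF Ua U UU])
  have TW: "T = mat_adjoint W * W"
  proof -
    have "T = mat_adjoint U * (mat_adjoint A * A) * U" unfolding T_def H_def ..
    also have "\<dots> = mat_adjoint U * (mat_adjoint A * A * U)"
      by (rule assoc_mult_mat[OF Ua mult_carrier_mat[OF Aa A] U])
    also have "\<dots> = mat_adjoint U * (mat_adjoint A * (A * U))" using assoc_mult_mat[OF Aa A U] by simp
    also have "\<dots> = (mat_adjoint U * mat_adjoint A) * (A * U)"
      using assoc_mult_mat[OF Ua Aa mult_carrier_mat[OF A U]] by simp
    also have "\<dots> = mat_adjoint W * W" unfolding W_def using adj_mult[OF A U] by simp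
    finally show ?thesis .
  qed
  have Tii: "T $$ (i,i) = complex_of_real ((\<sigma> i)\<^sup>2)" if i: "i < n" for i
  proof -
    have "T $$ (i,i) = (\<Sum>x<n. cnj (W $$ (x,i)) * W $$ (x,i))"
      unfolding TW using mult_entry[OF adj_carrier[OF W] W i i] W i by simp
    also have "\<dots> = complex_of_real (\<Sum>x<n. (cmod (W $$ (x,i)))\<^sup>2)"
      unfolding of_real_sum by (rule sum.cong) (simp_all add: complex_norm_square mult.commute del: of_real_power)
    also have "\<dots> = complex_of_real ((\<sigma> i)\<^sup>2)" unfolding \<sigma>_def W_def by (simp add: sum_nonneg)
    finally show ?thesis .
  qed
  have sim: "similar_mat H T"
  proof -
    have UH: "mat_adjoint U * H \<in> carrier_mat n n" by (rule mult_carrier_mat[OF Ua H])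
    have "U * T * mat_adjoint U = U * (T * mat_adjoint U)" by (rule assoc_mult_mat[OF U T Ua])
    also have "T * mat_adjoint U = mat_adjoint U * H * (U * mat_adjoint U)"
      unfolding T_def by (rule assoc_mult_mat[OF UH U Ua])
    also have "\<dots> = mat_adjoint U * H" unfolding UU' by (rule right_mult_one_mat[OF UH])
    also have "U * (mat_adjoint U * H) = (U * mat_adjoint U) * H" by (rule assoc_mult_mat[OF U Ua H, symmetric])
    also have "\<dots> = H" unfolding UU' using H by simp
    finally have "H = U * T * mat_adjoint U" by simp
    then have "similar_mat_wit H T U (mat_adjoint U)"
      by (intro similar_mat_witI[OF UU' UU _ H T U Ua])
    then show ?thesis unfolding similar_mat_def by blast
  qed
  have "char_poly H = char_poly T" by (rule char_poly_similar[OF sim])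
  also have "\<dots> = (\<Prod>a\<leftarrow>diag_mat T. [:- a, 1:])"
    by (rule char_poly_upper_triangular[OF T]) (use ut in \<open>simp add: T_def H_def\<close>)
  finally have "proots (char_poly H) = mset (diag_mat T)" by (simp add: proots_linear_prod)
  moreover have "image_mset (\<lambda>z. sqrt (Re z)) (mset (diag_mat T)) = mset (map \<sigma> [0..<n])"
  proof -
    have "map (\<lambda>z. sqrt (Re z)) (diag_mat T) = map \<sigma> [0..<n]"
      using T by (auto simp: diag_mat_def Tii \<sigma>_def sum_nonneg)
    then show ?thesis by (metis mset_map)
  qed
  ultimately show "sing_vals A = rev (sorted_list_of_multiset (mset (map \<sigma> [0..<n])))"
    unfolding sing_vals_def H_def by simp
  have WW: "W * mat_adjoint W = A * mat_adjoint A"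
  proof -
    have "W * mat_adjoint W = A * U * (mat_adjoint U * mat_adjoint A)"
      unfolding W_def using adj_mult[OF A U] by simp
    also have "\<dots> = A * (U * (mat_adjoint U * mat_adjoint A))" by (rule assoc_mult_mat[OF A U mult_carrier_mat[OF Ua Aa]])
    also have "U * (mat_adjoint U * mat_adjoint A) = (U * mat_adjoint U) * mat_adjoint A"
      by (rule assoc_mult_mat[OF U Ua Aa, symmetric])
    also have "A * ((U * mat_adjoint U) * mat_adjoint A) = A * (U * mat_adjoint U) * mat_adjoint A"
      by (rule assoc_mult_mat[OF A mult_carrier_mat[OF U Ua] Aa, symmetric])
    also have "\<dots> = A * mat_adjoint A" unfolding UU' using A by simp
    finally show ?thesis .
  qed
  have "(\<Sum>i<n. (\<sigma> i)\<^sup>2) = (\<Sum>i<n. \<Sum>x<n. (cmod (W $$ (x,i)))\<^sup>2)"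
    unfolding \<sigma>_def W_def by (simp add: sum_nonneg)
  also have "\<dots> = (\<Sum>x<n. \<Sum>i<n. (cmod (W $$ (x,i)))\<^sup>2)" by (rule sum.swap)
  also have "\<dots> = (\<Sum>x<n. \<Sum>y<n. (cmod (A $$ (x,y)))\<^sup>2)"
  proof (rule sum.cong[OF refl])
    fix x assume "x \<in> {..<n}"
    then have x: "x < n" by simp
    have "complex_of_real (\<Sum>i<n. (cmod (W $$ (x,i)))\<^sup>2) = (W * mat_adjoint W) $$ (x,x)"
      unfolding of_real_sum mult_entry[OF W adj_carrier[OF W] x x]
      by (rule sum.cong) (use W x in \<open>simp_all add: complex_norm_square del: of_real_power\<close>)
    also have "\<dots> = (A * mat_adjoint A) $$ (x,x)" unfolding WW ..
    also have "\<dots> = complex_of_real (\<Sum>y<n. (cmod (A $$ (x,y)))\<^sup>2)"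
      unfolding of_real_sum mult_entry[OF A adj_carrier[OF A] x x]
      by (rule sum.cong) (use A x in \<open>simp_all add: complex_norm_square del: of_real_power\<close>)
    finally show "(\<Sum>i<n. (cmod (W $$ (x,i)))\<^sup>2) = (\<Sum>y<n. (cmod (A $$ (x,y)))\<^sup>2)"
      using of_real_eq_iff by blast
  qed
  finally show "(\<Sum>i<n. (\<sigma> i)\<^sup>2) = (\<Sum>x<n. \<Sum>y<n. (cmod (A $$ (x,y)))\<^sup>2)" .
  have AW: "A = W * mat_adjoint U"
  proof -
    have "W * mat_adjoint U = A * (U * mat_adjoint U)" unfolding W_def by (rule assoc_mult_mat[OF A U Ua])
    then show ?thesis unfolding UU' using A by simp
  qed
  have "(\<Sum>x<n. A $$ (x,x)) = (\<Sum>x<n. \<Sum>i<n. W $$ (x,i) * cnj (U $$ (x,i)))"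
  proof (rule sum.cong[OF refl])
    fix x assume "x \<in> {..<n}"
    then have x: "x < n" by simp
    show "A $$ (x,x) = (\<Sum>i<n. W $$ (x,i) * cnj (U $$ (x,i)))"
      apply (subst AW)
      unfolding mult_entry[OF W Ua x x]
      by (rule sum.cong) (use U x in simp_all)
  qed
  also have "\<dots> = (\<Sum>i<n. \<Sum>x<n. cnj (U $$ (x,i)) * W $$ (x,i))"
    by (subst sum.swap) (simp add: mult.commute)
  finally have tr: "(\<Sum>x<n. A $$ (x,x)) = (\<Sum>i<n. \<Sum>x<n. cnj (U $$ (x,i)) * W $$ (x,i))" .
  have Ucol: "(\<Sum>x<n. (cmod (U $$ (x,i)))\<^sup>2) = 1" if i: "i < n" for i
  proof -
    have "complex_of_real (\<Sum>x<n. (cmod (U $$ (x,i)))\<^sup>2) = (mat_adjoint U * U) $$ (i,i)"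
      unfolding of_real_sum mult_entry[OF Ua U i i]
      by (rule sum.cong) (use U i in \<open>simp_all add: complex_norm_square mult.commute del: of_real_power\<close>)
    also have "\<dots> = 1" unfolding UU using i by simp
    finally show ?thesis using of_real_eq_1_iff by blast
  qed
  have "cmod (\<Sum>x<n. A $$ (x,x)) \<le> (\<Sum>i<n. cmod (\<Sum>x<n. cnj (U $$ (x,i)) * W $$ (x,i)))"
    unfolding tr by (rule norm_sum)
  also have "\<dots> \<le> (\<Sum>i<n. \<sigma> i)"
  proof (rule sum_mono)
    fix i assume "i \<in> {..<n}"
    then have i: "i < n" by simp
    have "cmod (\<Sum>x<n. cnj (U $$ (x,i)) * W $$ (x,i)) \<le> sqrt (\<Sum>x<n. (cmod (U $$ (x,i)))\<^sup>2) * sqrt (\<Sum>x<n. (cmod (W $$ (x,i)))\<^sup>2)"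
      by (rule cs_complex[of "\<lambda>x. U $$ (x,i)" "\<lambda>x. W $$ (x,i)"])
    then show "cmod (\<Sum>x<n. cnj (U $$ (x,i)) * W $$ (x,i)) \<le> \<sigma> i"
      unfolding Ucol[OF i] \<sigma>_def W_def by simp
  qed
  finally show "cmod (\<Sum>x<n. A $$ (x,x)) \<le> (\<Sum>i<n. \<sigma> i)" .
qed



lemma sv_facts:
  fixes A :: "complex mat"
  assumes A: "A \<in> carrier_mat d d"
  shows "length (sing_vals A) = d"
    and "\<forall>s\<in>set (sing_vals A). s \<ge> 0"
    and "sum_list (map (\<lambda>s. s\<^sup>2) (sing_vals A)) = (\<Sum>x<d. \<Sum>y<d. (cmod (A $$ (x,y)))\<^sup>2)"
    and "cmod (\<Sum>x<d. A $$ (x,x)) \<le> sum_list (sing_vals A)"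
proof -
  have H: "mat_adjoint A * A \<in> carrier_mat d d" by (rule mult_carrier_mat[OF adj_carrier[OF A] A])
  obtain U where U: "U \<in> carrier_mat d d" and UU: "mat_adjoint U * U = 1\<^sub>m d"
    and ut: "upper_triangular (mat_adjoint U * (mat_adjoint A * A) * U)"
    using schur_unitary[OF H] by blast
  define \<sigma> where "\<sigma> = (\<lambda>i. sqrt (\<Sum>x<d. (cmod ((A * U) $$ (x,i)))\<^sup>2))"
  note m = sv_main[OF A U UU ut, folded \<sigma>_def]
  have ms: "mset (sing_vals A) = mset (map \<sigma> [0..<d])" unfolding m(1) by simp
  show "length (sing_vals A) = d" using arg_cong[OF ms, of size] by simp
  have "set (sing_vals A) = set (map \<sigma> [0..<d])" using arg_cong[OF ms, of set_mset] by simp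
  then show "\<forall>s\<in>set (sing_vals A). s \<ge> 0" unfolding \<sigma>_def by (auto simp: sum_nonneg)
  have sl: "sum_list (map f (sing_vals A)) = (\<Sum>i<d. f (\<sigma> i))" for f :: "real \<Rightarrow> real"
  proof -
    have "sum_list (map f (sing_vals A)) = sum_mset (mset (map f (sing_vals A)))"
      by (rule sum_mset_sum_list[symmetric])
    also have "mset (map f (sing_vals A)) = mset (map f (map \<sigma> [0..<d]))" unfolding mset_map ms ..
    also have "sum_mset (mset (map f (map \<sigma> [0..<d]))) = sum_list (map f (map \<sigma> [0..<d]))"
      by (rule sum_mset_sum_list)
    also have "\<dots> = (\<Sum>i<d. f (\<sigma> i))"
      by (simp add: sum_list_sum_nth atLeast0LessThan)
    finally show ?thesis .
  qed
  show "sum_list (map (\<lambda>s. s\<^sup>2) (sing_vals A)) = (\<Sum>x<d. \<Sum>y<d. (cmod (A $$ (x,y)))\<^sup>2)"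
    using sl[of "\<lambda>s. s\<^sup>2"] m(2) by (simp add: \<sigma>_def)
  show "cmod (\<Sum>x<d. A $$ (x,x)) \<le> sum_list (sing_vals A)"
    using sl[of "\<lambda>s. s"] m(3) by simp
qed

lemma qform_omega:
  "qform d (P_omega d) psi = complex_of_real ((cmod (\<Sum>i<d. psi $$ (i,i)))\<^sup>2 / real d)"
proof -
  define z where "z = (\<Sum>q\<in>tensor_idx d. cnj (omega d $$ q) * psi $$ q)"
  have om: "omega d $$ (i,j) = (if i = j then complex_of_real (1 / sqrt (real d)) else 0)" if "i < d" "j < d" for i j
    using that unfolding omega_def by simp
  have "qform d (P_omega d) psi = (\<Sum>p\<in>tensor_idx d. \<Sum>q\<in>tensor_idx d. (cnj (psi $$ p) * omega d $$ p) * (cnj (omega d $$ q) * psi $$ q))"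
    unfolding qform_def P_omega_def by (rule sum.cong[OF refl], rule sum.cong[OF refl]) (simp add: mult_ac)
  also have "\<dots> = (\<Sum>p\<in>tensor_idx d. cnj (psi $$ p) * omega d $$ p) * z"
    unfolding z_def by (rule sum_product[symmetric])
  also have "(\<Sum>p\<in>tensor_idx d. cnj (psi $$ p) * omega d $$ p) = cnj z"
    unfolding z_def cnj_sum by (rule sum.cong) (auto simp: tensor_idx_def om)
  finally have qz: "qform d (P_omega d) psi = cnj z * z" .
  have "z = (\<Sum>i<d. \<Sum>j<d. cnj (omega d $$ (i,j)) * psi $$ (i,j))"
    unfolding z_def tensor_idx_def by (simp add: sum.cartesian_product)
  also have "\<dots> = (\<Sum>i<d. complex_of_real (1 / sqrt (real d)) * psi $$ (i,i))"
  proof (rule sum.cong[OF refl])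
    fix i assume "i \<in> {..<d}"
    then have i: "i < d" by simp
    have "(\<Sum>j<d. cnj (omega d $$ (i,j)) * psi $$ (i,j)) = (\<Sum>j<d. if i = j then complex_of_real (1 / sqrt (real d)) * psi $$ (i,j) else 0)"
      by (rule sum.cong) (auto simp: om i)
    also have "\<dots> = complex_of_real (1 / sqrt (real d)) * psi $$ (i,i)" using i by (subst sum.delta') auto
    finally show "(\<Sum>j<d. cnj (omega d $$ (i,j)) * psi $$ (i,j)) = complex_of_real (1 / sqrt (real d)) * psi $$ (i,i)" .
  qed
  also have "\<dots> = complex_of_real (1 / sqrt (real d)) * (\<Sum>i<d. psi $$ (i,i))" by (simp add: sum_distrib_left)
  finally have zz: "z = complex_of_real (1 / sqrt (real d)) * (\<Sum>i<d. psi $$ (i,i))" .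
  have "cnj z * z = complex_of_real ((cmod z)\<^sup>2)" by (simp add: complex_norm_square mult.commute del: of_real_power)
  also have "(cmod z)\<^sup>2 = (cmod (\<Sum>i<d. psi $$ (i,i)))\<^sup>2 / real d"
  proof -
    have c: "(cmod (complex_of_real (1 / sqrt (real d))))\<^sup>2 = 1 / real d"
      unfolding norm_of_real by (simp add: power_divide)
    show ?thesis unfolding zz norm_mult power_mult_distrib c by simp
  qed
  finally show ?thesis using qz by simp
qed

lemma unit_sum:
  assumes "unit_vec d psi"
  shows "(\<Sum>x<d. \<Sum>y<d. (cmod (psi $$ (x,y)))\<^sup>2) = 1"
  using assms unfolding unit_vec_def tensor_idx_def by (simp add: sum.cartesian_product)

lemma mean_ineq:
  fixes a :: "nat \<Rightarrow> real"
  assumes "finite I"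
  shows "(\<Sum>x\<in>I. a x)\<^sup>2 \<le> real (card I) * (\<Sum>x\<in>I. (a x)\<^sup>2)"
proof (cases "card I = 0")
  case True then show ?thesis using assms by simp
next
  case False
  define N where "N = real (card I)"
  define S where "S = (\<Sum>x\<in>I. a x)"
  define m where "m = S / N"
  have Np: "N > 0" using False unfolding N_def by simp
  have "0 \<le> (\<Sum>x\<in>I. (a x - m)\<^sup>2)" by (simp add: sum_nonneg)
  also have "\<dots> = (\<Sum>x\<in>I. (a x)\<^sup>2) - (\<Sum>x\<in>I. 2 * a x * m) + (\<Sum>x\<in>I. m\<^sup>2)"
    by (simp add: power2_diff sum.distrib sum_subtractf)
  also have "(\<Sum>x\<in>I. 2 * a x * m) = 2 * m * S" unfolding S_def sum_distrib_left by (rule sum.cong) (simp_all add: mult_ac)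
  also have "(\<Sum>x\<in>I. m\<^sup>2) = N * m\<^sup>2" unfolding N_def by simp
  also have "(\<Sum>x\<in>I. (a x)\<^sup>2) - 2 * m * S + N * m\<^sup>2 = (\<Sum>x\<in>I. (a x)\<^sup>2) - S\<^sup>2 / N"
    unfolding m_def using Np by (simp add: power2_eq_square field_simps)
  finally have "S\<^sup>2 / N \<le> (\<Sum>x\<in>I. (a x)\<^sup>2)" by simp
  then have "S\<^sup>2 \<le> N * (\<Sum>x\<in>I. (a x)\<^sup>2)" using Np by (simp add: field_simps)
  then show ?thesis unfolding S_def N_def .
qed

lemma key_ineq:
  fixes k \<theta> S t Q :: real
  assumes k: "k \<ge> 1" and th: "0 \<le> \<theta>" "\<theta> < 1" and S: "S \<ge> 0" and t: "t \<ge> 0"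
    and SQ: "S\<^sup>2 \<le> k * Q" and Qt: "Q + t\<^sup>2 = 1" and tS: "k * t \<le> \<theta> * S"
  shows "(S + t)\<^sup>2 \<le> (k + \<theta>)\<^sup>2 / (k + \<theta>\<^sup>2)"
proof -
  have iden: "k * (k + \<theta>\<^sup>2) * (S + t)\<^sup>2 + (\<theta> * S - k * t) * ((2*k + \<theta> - k*\<theta>) * S - k * (k + 2*\<theta> - 1) * t)
      = (k + \<theta>)\<^sup>2 * (S\<^sup>2 + k * t\<^sup>2)"
    by (simp add: power2_eq_square algebra_simps)
  have f1: "\<theta> * S - k * t \<ge> 0" using tS by simp
  have "k * (k + 2*\<theta> - 1) * t \<le> (k + 2*\<theta> - 1) * (\<theta> * S)"
    using tS k th by (simp add: mult.assoc mult.left_commute[of k] mult_left_mono)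
  moreover have "(k + 2*\<theta> - 1) * (\<theta> * S) \<le> (2*k + \<theta> - k*\<theta>) * S"
  proof -
    have "(2*k + \<theta> - k*\<theta>) - (k + 2*\<theta> - 1) * \<theta> = 2 * (1 - \<theta>) * (k + \<theta>)" by (simp add: algebra_simps)
    also have "\<dots> \<ge> 0" using k th by simp
    finally have "(k + 2*\<theta> - 1) * \<theta> \<le> (2*k + \<theta> - k*\<theta>)" by simp
    then show ?thesis using S by (simp add: mult.assoc[symmetric] mult_right_mono)
  qed
  ultimately have f2: "(2*k + \<theta> - k*\<theta>) * S - k * (k + 2*\<theta> - 1) * t \<ge> 0" by linarith
  have "k * (k + \<theta>\<^sup>2) * (S + t)\<^sup>2 \<le> (k + \<theta>)\<^sup>2 * (S\<^sup>2 + k * t\<^sup>2)"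
    using iden mult_nonneg_nonneg[OF f1 f2] by linarith
  also have "\<dots> \<le> (k + \<theta>)\<^sup>2 * (k * Q + k * t\<^sup>2)" using SQ by (simp add: mult_left_mono)
  also have "k * Q + k * t\<^sup>2 = k"
  proof -
    have "k * Q + k * t\<^sup>2 = k * (Q + t\<^sup>2)" by (simp add: distrib_left)
    then show ?thesis using Qt by simp
  qed
  finally have "k * (k + \<theta>\<^sup>2) * (S + t)\<^sup>2 \<le> (k + \<theta>)\<^sup>2 * k" .
  then have "(k + \<theta>\<^sup>2) * (S + t)\<^sup>2 \<le> (k + \<theta>)\<^sup>2" using k by (simp add: mult.assoc mult.commute[of k])
  moreover have "k + \<theta>\<^sup>2 > 0" using k by (simp add: add_pos_nonneg)
  ultimately show ?thesis by (simp add: field_simps)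
qed



lemma shift_sum: "(\<Sum>j=1..n. F j) = (\<Sum>i<n. F (Suc i) :: real)"
  using sum.atLeast1_atMost_eq[of F n] by simp

lemma split_sum:
  fixes h :: "nat \<Rightarrow> real"
  assumes "k \<le> d" "\<And>i. k < i \<Longrightarrow> i < d \<Longrightarrow> h i = 0"
  shows "(\<Sum>i<d. h i) = (\<Sum>i<k. h i) + (if k < d then h k else 0)"
proof -
  have "{..<d} = {..<k} \<union> {k..<d}" using assms(1) by auto
  moreover have "(\<Sum>i\<in>{..<k} \<union> {k..<d}. h i) = (\<Sum>i<k. h i) + (\<Sum>i\<in>{k..<d}. h i)"
    by (rule sum.union_disjoint) auto
  ultimately have "(\<Sum>i<d. h i) = (\<Sum>i<k. h i) + (\<Sum>i\<in>{k..<d}. h i)" by simp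
  also have "(\<Sum>i\<in>{k..<d}. h i) = (if k < d then h k else 0)"
  proof (cases "k < d")
    case True
    then have "{k..<d} = insert k {Suc k..<d}" by auto
    then have "(\<Sum>i\<in>{k..<d}. h i) = h k + (\<Sum>i\<in>{Suc k..<d}. h i)" by simp
    also have "(\<Sum>i\<in>{Suc k..<d}. h i) = 0" using assms(2) by (intro sum.neutral) auto
    finally show ?thesis using True by simp
  next
    case False then show ?thesis by simp
  qed
  finally show ?thesis .
qed

lemma floor_facts:
  fixes \<alpha> :: real
  assumes "1 \<le> \<alpha>" "\<alpha> \<le> real d" "k = nat \<lfloor>\<alpha>\<rfloor>" "\<theta> = \<alpha> - real k"
  shows "1 \<le> k" "k \<le> d" "0 \<le> \<theta>" "\<theta> < 1" "\<theta> > 0 \<Longrightarrow> k < d"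
    "nat \<lceil>\<alpha>\<rceil> = (if \<theta> > 0 then k + 1 else k)"
proof -
  have fl: "\<lfloor>\<alpha>\<rfloor> \<ge> 1" using assms(1) by simp
  have rk: "real k = of_int \<lfloor>\<alpha>\<rfloor>" using fl assms(3) by simp
  show "1 \<le> k" using fl assms(3) by (simp add: le_nat_iff)
  have "\<lfloor>\<alpha>\<rfloor> \<le> int d" using assms(2) by (simp add: floor_le_iff)
  then show kd: "k \<le> d" using assms(3) by simp
  show "0 \<le> \<theta>" using assms(4) rk by simp
  show "\<theta> < 1" using assms(4) rk by linarith
  show "\<theta> > 0 \<Longrightarrow> k < d" using assms(2,4) by simp
  show "nat \<lceil>\<alpha>\<rceil> = (if \<theta> > 0 then k + 1 else k)"
  proof (cases "\<theta> > 0")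
    case True
    have "\<lceil>\<alpha>\<rceil> = int k + 1"
      by (rule ceiling_unique) (use True assms(4) rk floor_correct[of \<alpha>] in auto)
    then show ?thesis using True by simp
  next
    case False
    then have "\<theta> = 0" using \<open>0 \<le> \<theta>\<close> by simp
    then have "\<alpha> = real k" using assms(4) by simp
    then show ?thesis using False by simp
  qed
qed



lemma schmidt_nonneg:
  assumes "psi \<in> carrier_mat d d" shows "schmidt psi j \<ge> 0"
  using sv_facts(2)[OF assms] unfolding schmidt_def by (auto simp: nth_mem)

lemma schmidt_beyond:
  assumes "psi \<in> carrier_mat d d" "j > d" shows "schmidt psi j = 0"
  using sv_facts(1)[OF assms(1)] assms(2) unfolding schmidt_def by auto

lemma schmidt_sums:
  fixes f :: "real \<Rightarrow> real"
  assumes A: "psi \<in> carrier_mat d d"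
  shows "(\<Sum>j=1..d. f (schmidt psi j)) = sum_list (map f (sing_vals psi))"
proof -
  have len: "length (sing_vals psi) = d" by (rule sv_facts(1)[OF A])
  have "(\<Sum>j=1..d. f (schmidt psi j)) = (\<Sum>i<d. f (schmidt psi (Suc i)))" by (rule shift_sum)
  also have "\<dots> = (\<Sum>i<d. f (sing_vals psi ! i))"
    by (rule sum.cong) (auto simp: schmidt_def len)
  also have "\<dots> = sum_list (map f (sing_vals psi))"
    by (simp add: sum_list_sum_nth len atLeast0LessThan)
  finally show ?thesis .
qed

lemma upper_bound:
  fixes d :: nat and \<alpha> :: real
  assumes d: "d \<ge> 2" and a1: "1 \<le> \<alpha>" and a2: "\<alpha> \<le> real d"
    and kdef: "k = nat \<lfloor>\<alpha>\<rfloor>" and thdef: "\<theta> = \<alpha> - real k"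
    and V: "psi \<in> V_alpha d \<alpha>"
  shows "Re (qform d (P_omega d) psi) \<le> (real k + \<theta>)\<^sup>2 / (real d * (real k + \<theta>\<^sup>2))"
proof -
  note ff = floor_facts[OF a1 a2 kdef thdef]
  from V have uv: "unit_vec d psi" and adm: "admissible d \<alpha> psi" unfolding V_alpha_def by auto
  then have A: "psi \<in> carrier_mat d d" unfolding unit_vec_def by auto
  define f where "f j = schmidt psi j" for j
  have fnn: "f j \<ge> 0" for j unfolding f_def by (rule schmidt_nonneg[OF A])
  have adm1: "f j = 0" if "nat \<lceil>\<alpha>\<rceil> + 1 \<le> j" "j \<le> d" for j
    using adm that unfolding admissible_def Let_def f_def kdef[symmetric] thdef[symmetric] by auto
  have adm2: "\<theta> > 0 \<Longrightarrow> f (k + 1) \<le> \<theta> / real k * (\<Sum>j=1..k. f j)"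
    using adm unfolding admissible_def Let_def f_def kdef[symmetric] thdef[symmetric] by auto
  have fz: "f (Suc i) = 0" if "k < i" "i < d" for i
  proof -
    have "nat \<lceil>\<alpha>\<rceil> + 1 \<le> Suc i" using that ff(6) by auto
    then show ?thesis using adm1 that by simp
  qed
  have fk: "(if k < d then f (Suc k) else 0) = f (k + 1)"
    using schmidt_beyond[OF A, of "k+1"] ff(2) unfolding f_def by auto
  define S where "S = (\<Sum>j=1..k. f j)"
  define Q where "Q = (\<Sum>j=1..k. (f j)\<^sup>2)"
  define t where "t = f (k + 1)"
  have sumf: "(\<Sum>j=1..d. f j) = S + t"
  proof -
    have "(\<Sum>j=1..d. f j) = (\<Sum>i<d. f (Suc i))" by (rule shift_sum)
    also have "\<dots> = (\<Sum>i<k. f (Suc i)) + (if k < d then f (Suc k) else 0)"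
      by (rule split_sum) (use ff(2) fz in auto)
    also have "(\<Sum>i<k. f (Suc i)) = S" unfolding S_def by (rule shift_sum[symmetric])
    finally show ?thesis unfolding fk t_def .
  qed
  have sumf2: "(\<Sum>j=1..d. (f j)\<^sup>2) = Q + t\<^sup>2"
  proof -
    have "(\<Sum>j=1..d. (f j)\<^sup>2) = (\<Sum>i<d. (f (Suc i))\<^sup>2)" by (rule shift_sum)
    also have "\<dots> = (\<Sum>i<k. (f (Suc i))\<^sup>2) + (if k < d then (f (Suc k))\<^sup>2 else 0)"
      by (rule split_sum) (use ff(2) fz in auto)
    also have "(\<Sum>i<k. (f (Suc i))\<^sup>2) = Q" unfolding Q_def by (rule shift_sum[symmetric])
    also have "(if k < d then (f (Suc k))\<^sup>2 else 0) = t\<^sup>2" using fk unfolding t_def by (auto split: if_splits)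
    finally show ?thesis .
  qed
  have one: "Q + t\<^sup>2 = 1"
    using sumf2 schmidt_sums[OF A, of "\<lambda>s. s\<^sup>2"] sv_facts(3)[OF A] unit_sum[OF uv] unfolding f_def by simp
  have tr: "cmod (\<Sum>x<d. psi $$ (x,x)) \<le> S + t"
    using sumf schmidt_sums[OF A, of "\<lambda>s. s"] sv_facts(4)[OF A] unfolding f_def by simp
  have SQ: "S\<^sup>2 \<le> real k * Q"
    using mean_ineq[of "{1..k}" f] unfolding S_def Q_def by simp
  have S0: "S \<ge> 0" unfolding S_def by (simp add: sum_nonneg fnn)
  have t0: "t \<ge> 0" unfolding t_def by (rule fnn)
  have tS: "real k * t \<le> \<theta> * S"
  proof (cases "\<theta> > 0")
    case True
    have "t \<le> \<theta> / real k * S" using adm2[OF True] unfolding t_def S_def .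
    then show ?thesis using ff(1) by (simp add: field_simps)
  next
    case False
    then have th0: "\<theta> = 0" using ff(3) by simp
    have "t = 0"
    proof (cases "k + 1 \<le> d")
      case True
      then show ?thesis unfolding t_def using adm1[of "k+1"] ff(6) False by simp
    next
      case False
      then show ?thesis unfolding t_def f_def using schmidt_beyond[OF A, of "k+1"] by simp
    qed
    then show ?thesis using th0 by simp
  qed
  have key: "(S + t)\<^sup>2 \<le> (real k + \<theta>)\<^sup>2 / (real k + \<theta>\<^sup>2)"
    by (rule key_ineq) (use ff(1,3,4) S0 t0 SQ one tS in auto)
  have "Re (qform d (P_omega d) psi) = (cmod (\<Sum>x<d. psi $$ (x,x)))\<^sup>2 / real d"
    unfolding qform_omega by simp
  also have "\<dots> \<le> (S + t)\<^sup>2 / real d"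
    by (rule divide_right_mono[OF power_mono[OF tr]]) auto
  also have "\<dots> \<le> ((real k + \<theta>)\<^sup>2 / (real k + \<theta>\<^sup>2)) / real d"
    by (rule divide_right_mono[OF key]) auto
  also have "\<dots> = (real k + \<theta>)\<^sup>2 / (real d * (real k + \<theta>\<^sup>2))" by (simp add: field_simps)
  finally show ?thesis .
qed



lemma adj_one: "mat_adjoint (1\<^sub>m d :: complex mat) = 1\<^sub>m d"
  by (rule eq_matI) auto

lemma construction:
  fixes d :: nat and \<alpha> :: real
  assumes d: "d \<ge> 2" and a1: "1 \<le> \<alpha>" and a2: "\<alpha> \<le> real d"
    and kdef: "k = nat \<lfloor>\<alpha>\<rfloor>" and thdef: "\<theta> = \<alpha> - real k"
    and cdef: "c = 1 / sqrt (real k + \<theta>\<^sup>2)"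
    and gdef: "g = (\<lambda>i. if i < k then c else if i = k then c * \<theta> else 0)"
    and pdef: "psi0 = mat d d (\<lambda>(i,j). if i = j then complex_of_real (g i) else 0)"
  shows "psi0 \<in> V_alpha d \<alpha>"
    and "qform d (P_omega d) psi0 = complex_of_real ((real k + \<theta>)\<^sup>2 / (real d * (real k + \<theta>\<^sup>2)))"
    and "\<And>j. 1 \<le> j \<Longrightarrow> j \<le> d \<Longrightarrow> schmidt psi0 j = g (j - 1)"
proof -
  note ff = floor_facts[OF a1 a2 kdef thdef]
  have kp: "real k + \<theta>\<^sup>2 > 0" using ff(1) by (simp add: add_pos_nonneg)
  have cp: "c > 0" unfolding cdef using kp by simp
  have c2: "c\<^sup>2 = 1 / (real k + \<theta>\<^sup>2)" unfolding cdef using kp by (simp add: power_divide)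
  have gnn: "g i \<ge> 0" for i unfolding gdef using cp ff(3) by auto
  have gz: "g i = 0" if "k < i" for i unfolding gdef using that by auto
  have kd: "\<theta> = 0" if "\<not> k < d"
  proof -
    have "\<not> \<theta> > 0" using ff(5) that by blast
    then show ?thesis using ff(3) by simp
  qed
  have A: "psi0 \<in> carrier_mat d d" unfolding pdef by simp
  have ent: "psi0 $$ (i,j) = (if i = j then complex_of_real (g i) else 0)" if "i < d" "j < d" for i j
    using that unfolding pdef by simp
  have sumg: "(\<Sum>i<d. g i) = real k * c + c * \<theta>"
  proof -
    have "(\<Sum>i<d. g i) = (\<Sum>i<k. g i) + (if k < d then g k else 0)"
      by (rule split_sum) (use ff(2) gz in auto)
    also have "(\<Sum>i<k. g i) = real k * c" unfolding gdef by simp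
    also have "(if k < d then g k else 0) = c * \<theta>" unfolding gdef using kd by auto
    finally show ?thesis .
  qed
  have sumg2: "(\<Sum>i<d. (g i)\<^sup>2) = 1"
  proof -
    have "(\<Sum>i<d. (g i)\<^sup>2) = (\<Sum>i<k. (g i)\<^sup>2) + (if k < d then (g k)\<^sup>2 else 0)"
      by (rule split_sum) (use ff(2) gz in auto)
    also have "(\<Sum>i<k. (g i)\<^sup>2) = real k * c\<^sup>2" unfolding gdef by simp
    also have "(if k < d then (g k)\<^sup>2 else 0) = c\<^sup>2 * \<theta>\<^sup>2" unfolding gdef using kd by (auto simp: power_mult_distrib)
    also have "real k * c\<^sup>2 + c\<^sup>2 * \<theta>\<^sup>2 = c\<^sup>2 * (real k + \<theta>\<^sup>2)" by (simp add: algebra_simps)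
    also have "\<dots> = 1" unfolding c2 using kp by simp
    finally show ?thesis .
  qed
  have rowsum: "(\<Sum>y<d. (cmod (psi0 $$ (x,y)))\<^sup>2) = (g x)\<^sup>2" if x: "x < d" for x
  proof -
    have "(\<Sum>y<d. (cmod (psi0 $$ (x,y)))\<^sup>2) = (\<Sum>y<d. if x = y then (g x)\<^sup>2 else 0)"
      by (rule sum.cong) (use x in \<open>auto simp: ent\<close>)
    also have "\<dots> = (g x)\<^sup>2" using x by (subst sum.delta') auto
    finally show ?thesis .
  qed
  have uv: "unit_vec d psi0"
  proof -
    have "(\<Sum>p\<in>tensor_idx d. (cmod (psi0 $$ p))\<^sup>2) = (\<Sum>x<d. \<Sum>y<d. (cmod (psi0 $$ (x,y)))\<^sup>2)"
      unfolding tensor_idx_def by (simp add: sum.cartesian_product)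
    also have "\<dots> = (\<Sum>x<d. (g x)\<^sup>2)" by (rule sum.cong) (simp_all add: rowsum)
    finally show ?thesis unfolding unit_vec_def using A sumg2 by simp
  qed
  have one: "1\<^sub>m d \<in> carrier_mat d d" by simp
  have Ha: "mat_adjoint psi0 * psi0 \<in> carrier_mat d d" by (rule mult_carrier_mat[OF adj_carrier[OF A] A])
  have simpH: "mat_adjoint (1\<^sub>m d) * (mat_adjoint psi0 * psi0) * 1\<^sub>m d = mat_adjoint psi0 * psi0"
    unfolding adj_one left_mult_one_mat[OF Ha] right_mult_one_mat[OF Ha] ..
  have ut: "upper_triangular (mat_adjoint (1\<^sub>m d) * (mat_adjoint psi0 * psi0) * 1\<^sub>m d)"
    unfolding simpH upper_triangular_def
  proof (intro allI impI)
    fix i j assume i: "i < dim_row (mat_adjoint psi0 * psi0)" and ji: "j < i"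
    then have i': "i < d" using A by simp
    have j': "j < d" using i' ji by simp
    have "(mat_adjoint psi0 * psi0) $$ (i,j) = (\<Sum>x<d. mat_adjoint psi0 $$ (i,x) * psi0 $$ (x,j))"
      by (rule mult_entry[OF adj_carrier[OF A] A i' j'])
    also have "\<dots> = 0"
      by (rule sum.neutral) (use A i' j' ji in \<open>auto simp: ent\<close>)
    finally show "(mat_adjoint psi0 * psi0) $$ (i,j) = 0" .
  qed
  have UU: "mat_adjoint (1\<^sub>m d) * 1\<^sub>m d = (1\<^sub>m d :: complex mat)" unfolding adj_one by simp
  note svm = sv_main[OF A one UU ut]
  have sig: "sqrt (\<Sum>x<d. (cmod ((psi0 * 1\<^sub>m d) $$ (x,i)))\<^sup>2) = g i" if i: "i < d" for i
  proof -
    have "(\<Sum>x<d. (cmod ((psi0 * 1\<^sub>m d) $$ (x,i)))\<^sup>2) = (\<Sum>x<d. if x = i then (g i)\<^sup>2 else 0)"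
      by (rule sum.cong) (use A i in \<open>auto simp: ent\<close>)
    also have "\<dots> = (g i)\<^sup>2" using i by (subst sum.delta) auto
    finally show ?thesis using gnn[of i] by simp
  qed
  have mapeq: "map (\<lambda>i. sqrt (\<Sum>x<d. (cmod ((psi0 * 1\<^sub>m d) $$ (x,i)))\<^sup>2)) [0..<d] = map g [0..<d]"
    by (rule map_cong) (auto simp: sig)
  have sorted: "sorted (rev (map g [0..<d]))"
    unfolding sorted_rev_iff_nth_mono
  proof (intro allI impI)
    fix i j assume ij: "i \<le> j" and j: "j < length (map g [0..<d])"
    then have j': "j < d" by simp
    have "g j \<le> g i" unfolding gdef using ij cp ff(3,4)
      by (auto simp: mult_le_cancel_left1 less_imp_le)
    then show "map g [0..<d] ! j \<le> map g [0..<d] ! i" using ij j' by simp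
  qed
  have sortg: "sort (map g [0..<d]) = rev (map g [0..<d])"
    by (rule properties_for_sort) (simp_all add: sorted)
  have sv: "sing_vals psi0 = map g [0..<d]"
    using svm(1) unfolding mapeq sorted_list_of_multiset_mset sortg rev_rev_ident .
  show sch: "\<And>j. 1 \<le> j \<Longrightarrow> j \<le> d \<Longrightarrow> schmidt psi0 j = g (j - 1)"
    unfolding schmidt_def sv by auto
  have adm: "admissible d \<alpha> psi0"
    unfolding admissible_def Let_def kdef[symmetric] thdef[symmetric]
  proof (intro conjI allI impI)
    fix j assume j: "nat \<lceil>\<alpha>\<rceil> + 1 \<le> j \<and> j \<le> d"
    then have "schmidt psi0 j = g (j - 1)" by (intro sch) auto
    also have "g (j - 1) = 0"
    proof (cases "\<theta> > 0")
      case True then show ?thesis using j ff(6) gz by auto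
    next
      case False
      then have "\<theta> = 0" using ff(3) by simp
      then show ?thesis using j ff(6) unfolding gdef by auto
    qed
    finally show "schmidt psi0 j = 0" .
  next
    assume th: "\<theta> > 0"
    have kd': "k + 1 \<le> d" using ff(5)[OF th] by simp
    have "schmidt psi0 (k + 1) = c * \<theta>" using sch[of "k+1"] kd' unfolding gdef by simp
    moreover have "(\<Sum>j=1..k. schmidt psi0 j) = real k * c"
    proof -
      have "(\<Sum>j=1..k. schmidt psi0 j) = (\<Sum>j=1..k. c)"
        by (rule sum.cong) (use sch ff(2) in \<open>auto simp: gdef\<close>)
      then show ?thesis by simp
    qed
    ultimately show "schmidt psi0 (k + 1) \<le> \<theta> / real k * (\<Sum>j=1..k. schmidt psi0 j)"
      using ff(1) by simp
  qed
  show "psi0 \<in> V_alpha d \<alpha>" unfolding V_alpha_def using uv adm by simp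
  have trace: "(\<Sum>i<d. psi0 $$ (i,i)) = complex_of_real (real k * c + c * \<theta>)"
  proof -
    have "(\<Sum>i<d. psi0 $$ (i,i)) = (\<Sum>i<d. complex_of_real (g i))" by (rule sum.cong) (simp_all add: ent)
    also have "\<dots> = complex_of_real (\<Sum>i<d. g i)" by simp
    finally show ?thesis unfolding sumg .
  qed
  have nn: "real k * c + c * \<theta> \<ge> 0" using cp ff(3) by simp
  have "(real k * c + c * \<theta>)\<^sup>2 = c\<^sup>2 * (real k + \<theta>)\<^sup>2" by (simp add: power2_eq_square algebra_simps)
  also have "\<dots> = (real k + \<theta>)\<^sup>2 / (real k + \<theta>\<^sup>2)" unfolding c2 by simp
  finally have sq: "(real k * c + c * \<theta>)\<^sup>2 = (real k + \<theta>)\<^sup>2 / (real k + \<theta>\<^sup>2)" .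
  show "qform d (P_omega d) psi0 = complex_of_real ((real k + \<theta>)\<^sup>2 / (real d * (real k + \<theta>\<^sup>2)))"
    unfolding qform_omega trace norm_of_real using nn sq by simp
qed



theorem lemma4p5:
  fixes d :: nat and \<alpha> :: real
  assumes "d \<ge> 2" and "1 \<le> \<alpha>" and "\<alpha> \<le> real d"
  defines "k \<equiv> nat \<lfloor>\<alpha>\<rfloor>"
  defines "\<theta> \<equiv> \<alpha> - real k"
  shows "mu_alpha d \<alpha> (P_omega d) = (real k + \<theta>)\<^sup>2 / (real d * (real k + \<theta>\<^sup>2))
    \<and> (\<exists>psi\<in>V_alpha d \<alpha>.
          qform d (P_omega d) psi = complex_of_real (mu_alpha d \<alpha> (P_omega d))
        \<and> (\<forall>j\<in>{1..k}. schmidt psi j = 1 / sqrt (real k + \<theta>\<^sup>2))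
        \<and> (k + 1 \<le> d \<longrightarrow> schmidt psi (k + 1) = \<theta> / sqrt (real k + \<theta>\<^sup>2))
        \<and> (\<forall>j. k + 2 \<le> j \<and> j \<le> d \<longrightarrow> schmidt psi j = 0))
    \<and> (\<alpha> = real d \<longrightarrow> omega d \<in> V_alpha d \<alpha>
        \<and> qform d (P_omega d) (omega d) = complex_of_real (mu_alpha d \<alpha> (P_omega d)))"
proof -
  have kdef: "k = nat \<lfloor>\<alpha>\<rfloor>" unfolding k_def ..
  have thdef: "\<theta> = \<alpha> - real k" unfolding \<theta>_def ..
  note ff = floor_facts[OF assms(2,3) kdef thdef]
  define c where "c = 1 / sqrt (real k + \<theta>\<^sup>2)"
  define g where "g = (\<lambda>i. if i < k then c else if i = k then c * \<theta> else 0)"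
  define psi0 where "psi0 = mat d d (\<lambda>(i,j). if i = j then complex_of_real (g i) else 0)"
  define C where "C = (real k + \<theta>)\<^sup>2 / (real d * (real k + \<theta>\<^sup>2))"
  note con = construction[OF assms(1,2,3) kdef thdef c_def g_def psi0_def, folded C_def]
  have mu: "mu_alpha d \<alpha> (P_omega d) = C"
    unfolding mu_alpha_def
  proof (rule cSup_eq_maximum)
    show "C \<in> (\<lambda>psi. Re (qform d (P_omega d) psi)) ` V_alpha d \<alpha>"
      by (rule rev_image_eqI[OF con(1)]) (simp add: con(2))
  next
    fix x assume "x \<in> (\<lambda>psi. Re (qform d (P_omega d) psi)) ` V_alpha d \<alpha>"
    then obtain psi where psi: "psi \<in> V_alpha d \<alpha>" and x: "x = Re (qform d (P_omega d) psi)" by blast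
    show "x \<le> C" unfolding x C_def by (rule upper_bound[OF assms(1,2,3) kdef thdef psi])
  qed
  have part2: "\<exists>psi\<in>V_alpha d \<alpha>.
          qform d (P_omega d) psi = complex_of_real (mu_alpha d \<alpha> (P_omega d))
        \<and> (\<forall>j\<in>{1..k}. schmidt psi j = 1 / sqrt (real k + \<theta>\<^sup>2))
        \<and> (k + 1 \<le> d \<longrightarrow> schmidt psi (k + 1) = \<theta> / sqrt (real k + \<theta>\<^sup>2))
        \<and> (\<forall>j. k + 2 \<le> j \<and> j \<le> d \<longrightarrow> schmidt psi j = 0)"
  proof (rule bexI[OF _ con(1)], intro conjI ballI allI impI)
    show "qform d (P_omega d) psi0 = complex_of_real (mu_alpha d \<alpha> (P_omega d))" unfolding mu con(2) ..
  next
    fix j assume j: "j \<in> {1..k}"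
    then show "schmidt psi0 j = 1 / sqrt (real k + \<theta>\<^sup>2)"
      using con(3)[of j] ff(2) unfolding g_def c_def by auto
  next
    assume "k + 1 \<le> d"
    then show "schmidt psi0 (k + 1) = \<theta> / sqrt (real k + \<theta>\<^sup>2)"
      using con(3)[of "k+1"] unfolding g_def c_def by simp
  next
    fix j assume "k + 2 \<le> j \<and> j \<le> d"
    then show "schmidt psi0 j = 0" using con(3)[of j] unfolding g_def by auto
  qed
  have part3: "omega d \<in> V_alpha d \<alpha> \<and> qform d (P_omega d) (omega d) = complex_of_real (mu_alpha d \<alpha> (P_omega d))"
    if ad: "\<alpha> = real d"
  proof -
    have kd: "k = d" unfolding kdef ad by simp
    have th0: "\<theta> = 0" unfolding thdef kd ad by simp
    have "psi0 = omega d"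
      unfolding psi0_def omega_def by (rule eq_matI) (auto simp: g_def c_def kd th0)
    then show ?thesis using con(1,2) mu by simp
  qed
  show ?thesis using mu part2 part3 unfolding C_def by blast
qed



end
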